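(* The map $V:\mathcal S^{2,2}\to\mathcal S^{2,2}$ has a unique fixed point $p=(1/2,0,1/2,0)$, and there is a neighborhood $\mathcal U(p)\subset\mathcal S^{2,2}$ of $p$, open relative to $\mathcal S^{2,2}$, such that $\lim_{n\to\infty}V^n(s)=p$ for every $s\in\mathcal U(p)$.
   Context: $\mathcal S^{2,2}=\{(x,y,u,v)\in\mathbb{R}^4: x,y,u,v\ge0,\ x+y+u+v=1,\ x+y>0,\ u+v>0\}$. $V:\mathcal S^{2,2}\to\mathcal S^{2,2}$ is $V(x,y,u,v)=(x',y',u',v')$ with $x'=\dfrac{2xu+yu}{4(x+y)(u+v)}$, $y'=\dfrac{6xv+3yu+4yv}{12(x+y)(u+v)}$, $u'=\dfrac{6xu+6xv+3yu+4yv}{12(x+y)(u+v)}$, $v'=\dfrac{3yu+4yv}{12(x+y)(u+v)}$. $V^n$ denotes the $n$-fold iterate. *)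

theory Defs
  imports "HOL-Analysis.Analysis"
begin

type_synonym pt4 = "real \<times> real \<times> real \<times> real"

definition S22 :: "pt4 set" where
  "S22 = {(x,y,u,v). x \<ge> 0 \<and> y \<ge> 0 \<and> u \<ge> 0 \<and> v \<ge> 0 \<and> x + y + u + v = 1
          \<and> x + y > 0 \<and> u + v > 0}"

definition V :: "pt4 \<Rightarrow> pt4" where
  "V = (\<lambda>(x,y,u,v).
     ((2*x*u + y*u) / (4*(x+y)*(u+v)),
      (6*x* v + 3*y*u + 4*y* v) / (12*(x+y)*(u+v)),
      (6*x*u + 6*x* v + 3*y*u + 4*y* v) / (12*(x+y)*(u+v)),
      (3*y*u + 4*y* v) / (12*(x+y)*(u+v))))"

end

theory Submission
  imports Defs
begin

definition I :: "pt4 set" where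
  "I = {(x,y,u,v). x \<ge> 0 \<and> y \<ge> 0 \<and> u \<ge> 0 \<and> v \<ge> 0 \<and> x + y + u + v = 1
        \<and> y + v \<le> 1/12 \<and> x + y \<le> 1/2 \<and> 1/2 - (x + y) \<le> v / 6}"

lemma frac_aux:
  fixes A B N c :: real
  assumes "A \<noteq> 0" "B \<noteq> 0" "c \<noteq> 0"
  shows "N / (c * A * B) * (12 * A * B) = (12 / c) * N"
  using assms by (simp add: field_simps)

lemma step_gen:
  fixes x y u v x' y' u' v' :: real
  assumes "(x,y,u,v) \<in> S22" and "V (x,y,u,v) = (x',y',u',v')"
  defines "D \<equiv> 12 * (x+y) * (u+v)"
  shows "D > 0" "x' \<ge> 0" "y' \<ge> 0" "u' \<ge> 0" "v' \<ge> 0"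
    "x' * D = 6 * x * u + 3 * y * u" "y' * D = 6 * x * v + 3 * y * u + 4 * y * v"
    "u' * D = 6 * x * u + 6 * x * v + 3 * y * u + 4 * y * v" "v' * D = 3 * y * u + 4 * y * v"
    "x' + y' + u' + v' = 1" "(1/2 - (x' + y')) * D = 2 * y * v" "x' + y' \<le> 1/2"
    "(y' + v') * D = 6 * x * v + 6 * y * u + 8 * y * v"
proof -
  have h: "x \<ge> 0" "y \<ge> 0" "u \<ge> 0" "v \<ge> 0" "x + y + u + v = 1" "x + y > 0" "u + v > 0"
    using assms(1) by (auto simp: S22_def)
  show D: "D > 0" unfolding D_def using h by simp
  have nz: "x + y \<noteq> 0" "u + v \<noteq> 0" using h by auto
  have e: "x' = (2 * x * u + y * u) / (4 * (x+y) * (u+v))"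
    "y' = (6 * x * v + 3 * y * u + 4 * y * v) / (12 * (x+y) * (u+v))"
    "u' = (6 * x * u + 6 * x * v + 3 * y * u + 4 * y * v) / (12 * (x+y) * (u+v))"
    "v' = (3 * y * u + 4 * y * v) / (12 * (x+y) * (u+v))"
    using assms(2) by (auto simp: V_def)
  show "x' \<ge> 0" "y' \<ge> 0" "u' \<ge> 0" "v' \<ge> 0" unfolding e using h by auto
  show ex: "x' * D = 6 * x * u + 3 * y * u" unfolding e D_def by (subst frac_aux[OF nz]) (simp_all add: algebra_simps)
  show ey: "y' * D = 6 * x * v + 3 * y * u + 4 * y * v" unfolding e D_def by (subst frac_aux[OF nz]) (simp_all add: algebra_simps)
  show eu: "u' * D = 6 * x * u + 6 * x * v + 3 * y * u + 4 * y * v" unfolding e D_def by (subst frac_aux[OF nz]) (simp_all add: algebra_simps)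
  show ev: "v' * D = 3 * y * u + 4 * y * v" unfolding e D_def by (subst frac_aux[OF nz]) (simp_all add: algebra_simps)
  have "(x' + y' + u' + v') * D = 12 * (x + y) * (u + v)"
    unfolding distrib_right ex ey eu ev by (simp add: algebra_simps)
  also have "\<dots> = 1 * D" unfolding D_def by simp
  finally have "(x' + y' + u' + v') * D = 1 * D" .
  then show "x' + y' + u' + v' = 1" using D by simp
  have "(1/2 - (x' + y')) * D = D/2 - x' * D - y' * D" by (simp add: algebra_simps)
  also have "\<dots> = D/2 - (6 * x * u + 3 * y * u) - (6 * x * v + 3 * y * u + 4 * y * v)"
    by (simp only: ex ey)
  also have "\<dots> = 2 * y * v" unfolding D_def by (simp add: algebra_simps)
  finally show c: "(1/2 - (x' + y')) * D = 2 * y * v" .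
  have "0 \<le> (1/2 - (x' + y')) * D" unfolding c using h by simp
  then show "x' + y' \<le> 1/2" using D by (simp add: zero_le_mult_iff)
  show "(y' + v') * D = 6 * x * v + 6 * y * u + 8 * y * v"
    unfolding distrib_right ey ev by simp
qed

lemma P1:
  fixes x y u v :: real
  assumes "y\<ge>0" "v\<ge>0" "x\<ge>0" "u\<ge>0" "x+y+u+v=1" "y+v \<le> 1/12" "x+y \<le> 1/2" "1/2-(x+y) \<le> v/6"
  shows "12 * (x+y) * (u+v) * (y+v) - (6 * x * v + 6 * y * u + 8 * y * v) \<ge> 2/3 * y * v * (12 * (x+y) * (u+v))"
proof -
  define a where "a = x+y"
  define d where "d = 1/2 - a"
  have b: "u+v = 1/2 + d" using assms unfolding d_def a_def by linarith
  have x: "x = 1/2 - d - y" using d_def a_def by simp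
  have u: "u = 1/2 + d - v" using b by simp
  have d0: "d \<ge> 0" "d \<le> v/6" using assms d_def a_def by auto
  have key: "12 * (x+y) * (u+v) * (y+v) - (6 * x * v + 6 * y * u + 8 * y * v) = 4 * y * v - 12 * (1/2+d) * d * y + 12 * (1/2-d) * d * v"
    unfolding x u by (simp add: algebra_simps)
  have ab: "12 * (x+y) * (u+v) \<le> 3" unfolding x u by (simp add: algebra_simps)
  have d1: "d \<le> 1/2" using d0 assms by linarith
  have t1: "(1/2+d) * d * y \<le> 1 * (v/6) * y"
    by (rule mult_right_mono[OF mult_mono]) (use d0 d1 assms in auto)
  have t2: "0 \<le> (1/2-d) * d * v" using d0 d1 assms by simp
  have t3: "2/3 * y * v * (12 * (x+y) * (u+v)) \<le> 2/3 * y * v * 3"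
    by (rule mult_left_mono[OF ab]) (use assms in simp)
  show ?thesis unfolding key using t1 t2 t3 by (simp add: algebra_simps)
qed

lemma stepI:
  fixes x y u v x' y' u' v' :: real
  assumes "(x,y,u,v) \<in> I" "V (x,y,u,v) = (x',y',u',v')"
  shows "(x',y',u',v') \<in> I" "y' + v' \<le> y + v - 2/3 * y * v" "y/2 \<le> y'" "y/2 \<le> v'" "v' \<le> 2 * y"
proof -
  have h: "x \<ge> 0" "y \<ge> 0" "u \<ge> 0" "v \<ge> 0" "x + y + u + v = 1"
     "y + v \<le> 1/12" "x + y \<le> 1/2" "1/2 - (x + y) \<le> v / 6"
    using assms(1) by (auto simp: I_def)
  have S: "(x,y,u,v) \<in> S22" using h by (auto simp: S22_def)
  define D where "D = 12 * (x+y) * (u+v)"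
  note g = step_gen[OF S assms(2), folded D_def]
  have D: "D > 0" by (rule g(1))
  have yv: "0 \<le> y * v" using h by simp
  have nn: "0 \<le> x * v" "0 \<le> y * u" "0 \<le> x * u" using h by simp_all
  have p: "2/3 * y * v * D \<le> D * (y+v) - (6 * x * v + 6 * y * u + 8 * y * v)"
    using P1[OF h(2,4,1,3,5,6,7,8), folded D_def] by simp
  have q: "(y + v - 2/3 * y * v) * D = D * (y+v) - 2/3 * y * v * D" by (simp add: algebra_simps)
  have "(y' + v') * D \<le> (y + v - 2/3 * y * v) * D" unfolding q g(13) using p by linarith
  then show s: "y' + v' \<le> y + v - 2/3 * y * v" using D by simp
  have a16: "x + y \<ge> 1/6" using h by linarith
  have b0: "u + v \<ge> 0" using h by simp
  have m1: "y * (u+v) * (6 * (x+y)) \<le> y * (u+v) * 3"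
    by (rule mult_left_mono) (use h in auto)
  have m2: "3 * y * u + 4 * y * v \<ge> 3 * (y * (u+v))" using h by (simp add: algebra_simps)
  have c1: "(y/2) * D \<le> 3 * y * u + 4 * y * v"
  proof -
    have "(y/2) * D = y * (u+v) * (6 * (x+y))" unfolding D_def by (simp add: algebra_simps)
    also have "\<dots> \<le> y * (u+v) * 3" by (rule m1)
    also have "\<dots> \<le> 3 * y * u + 4 * y * v" using m2 by (simp add: algebra_simps)
    finally show ?thesis .
  qed
  have "(y/2) * D \<le> y' * D" unfolding g(7) using c1 nn by simp
  then show "y/2 \<le> y'" using D by simp
  have "(y/2) * D \<le> v' * D" unfolding g(9) using c1 by simp
  then show "y/2 \<le> v'" using D by simp
  have m3: "y * (u+v) * 4 \<le> y * (u+v) * (24 * (x+y))"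
    by (rule mult_left_mono) (use h a16 in auto)
  have m4: "3 * y * u + 4 * y * v \<le> 4 * (y * (u+v))" using h by (simp add: algebra_simps)
  have "v' * D \<le> (2 * y) * D"
  proof -
    have "v' * D = 3 * y * u + 4 * y * v" by (rule g(9))
    also have "\<dots> \<le> y * (u+v) * 4" using m4 by (simp add: algebra_simps)
    also have "\<dots> \<le> y * (u+v) * (24 * (x+y))" by (rule m3)
    also have "\<dots> = (2 * y) * D" unfolding D_def by (simp add: algebra_simps)
    finally show ?thesis .
  qed
  then show "v' \<le> 2 * y" using D by simp
  have m5: "8 * (y * v) \<le> 3 * (y * u)"
  proof -
    have "8 * v \<le> 3 * u" using h by linarith
    then have "y * (8 * v) \<le> y * (3 * u)" by (rule mult_left_mono) (use h in auto)
    then show ?thesis by (simp add: algebra_simps)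
  qed
  have "(1/2 - (x' + y')) * D \<le> (v'/6) * D"
    unfolding g(11) using g(9) m5 by (simp add: algebra_simps)
  then have "1/2 - (x' + y') \<le> v'/6" using D by simp
  then show "(x',y',u',v') \<in> I"
    unfolding I_def using g(2-5) g(10) g(12) s yv h(6) by auto
qed

lemma U_to_I:
  fixes x y u v x' y' u' v' :: real
  assumes S: "(x,y,u,v) \<in> S22" and hy: "y + v < 1/100" and ha: "\<bar>x + y - 1/2\<bar> < 1/100"
    and e: "V (x,y,u,v) = (x',y',u',v')"
  shows "(x',y',u',v') \<in> I"
proof -
  have h: "x \<ge> 0" "y \<ge> 0" "u \<ge> 0" "v \<ge> 0" "x + y + u + v = 1"
    using S by (auto simp: S22_def)
  define D where "D = 12 * (x+y) * (u+v)"
  note g = step_gen[OF S e, folded D_def]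
  have a1: "x + y \<ge> 49/100" "u + v \<ge> 49/100" using ha h by arith+
  have D2: "D \<ge> 2"
  proof -
    have "(49/100) * (49/100) \<le> (x+y) * (u+v)" by (rule mult_mono) (use a1 in auto)
    moreover have "D = 12 * ((x+y) * (u+v))" unfolding D_def by simp
    ultimately show ?thesis by linarith
  qed
  have b1: "v * (x + y) \<le> v * 1" by (rule mult_left_mono) (use h in auto)
  have b2: "y * u \<le> y * 1" by (rule mult_left_mono) (use h in auto)
  have "(y' + v') * 2 \<le> (y' + v') * D" by (rule mult_left_mono) (use g(3,5) D2 in auto)
  also have "\<dots> = 6 * x * v + 6 * y * u + 8 * y * v" by (rule g(13))
  also have "\<dots> \<le> 8 * (v * (x + y)) + 6 * (y * u)" using h by (simp add: algebra_simps)
  also have "\<dots> \<le> 8 * (y + v)" using b1 b2 h by simp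
  finally have s: "y' + v' \<le> 1/12" using hy by simp
  have m5: "8 * (y * v) \<le> 3 * (y * u)"
  proof -
    have "8 * v \<le> 3 * u" using h hy a1 by linarith
    then have "y * (8 * v) \<le> y * (3 * u)" by (rule mult_left_mono) (use h in auto)
    then show ?thesis by (simp add: algebra_simps)
  qed
  have "(1/2 - (x' + y')) * D \<le> (v'/6) * D"
    unfolding g(11) using g(9) m5 by (simp add: algebra_simps)
  then have "1/2 - (x' + y') \<le> v'/6" using g(1) by simp
  then show "(x',y',u',v') \<in> I"
    unfolding I_def using g(2-5) g(10) g(12) s by auto
qed

lemma fixed_unique:
  fixes x y u v :: real
  assumes S: "(x,y,u,v) \<in> S22" and e: "V (x,y,u,v) = (x,y,u,v)"
  shows "(x,y,u,v) = (1/2, 0, 1/2, 0)"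
proof -
  have h: "x \<ge> 0" "y \<ge> 0" "u \<ge> 0" "v \<ge> 0" "x + y + u + v = 1" "x + y > 0" "u + v > 0"
    using S by (auto simp: S22_def)
  define D where "D = 12 * (x+y) * (u+v)"
  note g = step_gen[OF S e, folded D_def]
  define a where "a = x + y"
  define d where "d = 1/2 - a"
  define b where "b = u + v"
  have bd: "b = 1/2 + d" using h unfolding b_def d_def a_def by linarith
  have x: "x = 1/2 - d - y" using d_def a_def by simp
  have u: "u = 1/2 + d - v" using bd b_def by simp
  have Dab: "D = 12 * a * b" unfolding D_def a_def b_def by simp
  have dD: "d * D = 2 * y * v" using g(11) unfolding d_def a_def by simp
  have key: "D * (y+v) - (6 * x * v + 6 * y * u + 8 * y * v) = 4 * y * v - 12 * b * d * y + 12 * a * d * v"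
    unfolding Dab a_def bd unfolding x u by (simp add: algebra_simps)
  have eq0: "4 * y * v - 12 * b * d * y + 12 * a * d * v = 0"
    using g(13) key by (simp add: algebra_simps)
  have "0 = (4 * y * v - 12 * b * d * y + 12 * a * d * v) * D" using eq0 by simp
  also have "\<dots> = 4 * y * v * D - 12 * b * y * (d * D) + 12 * a * v * (d * D)"
    by (simp add: algebra_simps)
  also have "\<dots> = y * v * (4 * D - 24 * b * y + 24 * a * v)" unfolding dD by (simp add: algebra_simps)
  finally have E: "y * v * (4 * D - 24 * b * y + 24 * a * v) = 0" by simp
  have pos: "4 * D - 24 * b * y + 24 * a * v > 0"
  proof -
    have "4 * D - 24 * b * y = 24 * b * (a + x)" unfolding Dab a_def by (simp add: algebra_simps)
    moreover have "24 * b * (a + x) > 0" using h unfolding a_def b_def by simp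
    moreover have "24 * a * v \<ge> 0" using h unfolding a_def by simp
    ultimately show ?thesis by linarith
  qed
  have yv: "y * v = 0" using E pos by simp
  have D0: "D > 0" by (rule g(1))
  have y0: "y = 0"
  proof (cases "y = 0")
    case False
    then have v0: "v = 0" using yv by simp
    have "3 * y * u = 0" using g(9) v0 by simp
    moreover have "u > 0" using h v0 by simp
    ultimately show ?thesis by simp
  qed
  have v0: "v = 0" using g(9) y0 D0 by simp
  have "d = 0" using dD y0 D0 by simp
  then show ?thesis using x u y0 v0 by simp
qed

definition Yc :: "pt4 \<Rightarrow> real" where "Yc q = fst (snd q)"
definition Wc :: "pt4 \<Rightarrow> real" where "Wc q = snd (snd (snd q))"
definition Xc :: "pt4 \<Rightarrow> real" where "Xc q = fst q"
definition Uc :: "pt4 \<Rightarrow> real" where "Uc q = fst (snd (snd q))"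

lemma I_props:
  assumes "q \<in> I"
  shows "Yc q \<ge> 0" "Wc q \<ge> 0" "Xc q + Yc q \<le> 1/2" "1/2 - (Xc q + Yc q) \<le> Wc q / 6"
    "Xc q + Yc q + Uc q + Wc q = 1"
  using assms by (cases q; auto simp: I_def Yc_def Wc_def Xc_def Uc_def)+

lemma stepI_comp:
  assumes "q \<in> I"
  shows "V q \<in> I" "Yc (V q) + Wc (V q) \<le> Yc q + Wc q - 2/3 * Yc q * Wc q"
    "Yc q / 2 \<le> Yc (V q)" "Yc q / 2 \<le> Wc (V q)" "Wc (V q) \<le> 2 * Yc q"
proof -
  obtain x y u v where q: "q = (x,y,u,v)" by (cases q) auto
  obtain x' y' u' v' where e: "V (x,y,u,v) = (x',y',u',v')" by (cases "V (x,y,u,v)") auto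
  note r = stepI[OF assms[unfolded q] e]
  show "V q \<in> I" "Yc (V q) + Wc (V q) \<le> Yc q + Wc q - 2/3 * Yc q * Wc q"
    "Yc q / 2 \<le> Yc (V q)" "Yc q / 2 \<le> Wc (V q)" "Wc (V q) \<le> 2 * Yc q"
    using r unfolding q e by (simp_all add: Yc_def Wc_def)
qed

lemma conv_I:
  assumes "t \<in> I"
  shows "(\<lambda>n. (V ^^ n) t) \<longlonglongrightarrow> (1/2, 0, 1/2, 0)"
proof -
  define z where "z n = (V ^^ n) t" for n
  have zS: "z (Suc n) = V (z n)" for n unfolding z_def by simp
  have zI: "z n \<in> I" for n
  proof (induction n)
    case 0 then show ?case using assms by (simp add: z_def)
  next
    case (Suc n) then show ?case unfolding zS by (rule stepI_comp(1))
  qed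
  define Y where "Y n = Yc (z n)" for n
  define W where "W n = Wc (z n)" for n
  define X where "X n = Xc (z n)" for n
  define U where "U n = Uc (z n)" for n
  define S where "S n = Y n + W n" for n
  have Y0: "Y n \<ge> 0" and W0: "W n \<ge> 0" and A1: "X n + Y n \<le> 1/2"
    and A2: "1/2 - (X n + Y n) \<le> W n / 6" and sum1: "X n + Y n + U n + W n = 1" for n
    using I_props[OF zI[of n]] unfolding Y_def W_def X_def U_def by auto
  have st: "S (Suc n) \<le> S n - 2/3 * Y n * W n" "Y n / 2 \<le> Y (Suc n)" "Y n / 2 \<le> W (Suc n)"
    "W (Suc n) \<le> 2 * Y n" for n
    using stepI_comp(2-5)[OF zI[of n]] unfolding S_def Y_def W_def zS by auto
  have dec: "decseq S"
  proof (rule decseq_SucI)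
    fix n have "0 \<le> 2/3 * Y n * W n" using Y0 W0 by simp
    then show "S (Suc n) \<le> S n" using st(1)[of n] by linarith
  qed
  have S0: "\<forall>i. 0 \<le> S i" using Y0 W0 unfolding S_def by (simp add: add_nonneg_nonneg)
  obtain L where L: "S \<longlonglongrightarrow> L" using decseq_convergent[OF dec S0] by blast
  have L1: "(\<lambda>n. S (Suc n)) \<longlonglongrightarrow> L" using L filterlim_sequentially_Suc[of S] by simp
  have L2: "(\<lambda>n. S (Suc (Suc n))) \<longlonglongrightarrow> L" using L1 filterlim_sequentially_Suc[of "\<lambda>n. S (Suc n)"] by simp
  have G: "(\<lambda>n. sqrt (6 * (S (Suc n) - S (Suc (Suc n))))) \<longlonglongrightarrow> 0"
    using tendsto_real_sqrt[OF tendsto_mult[OF tendsto_const[of 6] tendsto_diff[OF L1 L2]]] by simp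
  have Ybound: "Y n \<le> sqrt (6 * (S (Suc n) - S (Suc (Suc n))))" for n
  proof -
    have "(Y n / 2) * (Y n / 2) \<le> Y (Suc n) * W (Suc n)"
      by (rule mult_mono) (use st(2,3)[of n] Y0 W0 in auto)
    also have "\<dots> \<le> 3/2 * (S (Suc n) - S (Suc (Suc n)))" using st(1)[of "Suc n"] by simp
    finally have "Y n ^ 2 \<le> 6 * (S (Suc n) - S (Suc (Suc n)))" by (simp add: power2_eq_square)
    then have "sqrt (Y n ^ 2) \<le> sqrt (6 * (S (Suc n) - S (Suc (Suc n))))"
      by (rule real_sqrt_le_mono)
    then show ?thesis using Y0[of n] by simp
  qed
  have Yl: "Y \<longlonglongrightarrow> 0"
    by (rule tendsto_sandwich[OF _ _ tendsto_const G]) (use Y0 Ybound in auto)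
  have "(\<lambda>n. W (Suc n)) \<longlonglongrightarrow> 0"
    by (rule tendsto_sandwich[OF _ _ tendsto_const tendsto_mult_right_zero[OF Yl, of 2]])
       (use W0 st(4) in auto)
  then have Wl: "W \<longlonglongrightarrow> 0" using filterlim_sequentially_Suc[of W] by simp
  have Al: "(\<lambda>n. X n + Y n) \<longlonglongrightarrow> 1/2"
  proof (rule tendsto_sandwich[OF _ _ _ tendsto_const])
    have "1/2 - W n / 6 \<le> X n + Y n" for n using A2[of n] by linarith
    then show "\<forall>\<^sub>F n in sequentially. 1/2 - W n / 6 \<le> X n + Y n" by auto
    show "\<forall>\<^sub>F n in sequentially. X n + Y n \<le> 1/2" using A1 by auto
    show "(\<lambda>n. 1/2 - W n / 6) \<longlonglongrightarrow> 1/2"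
      using tendsto_diff[OF tendsto_const[of "1/2"] tendsto_divide[OF Wl tendsto_const[of 6]]] by simp
  qed
  have Xl: "X \<longlonglongrightarrow> 1/2" using tendsto_diff[OF Al Yl] by simp
  have Ueq: "U n = 1 - (X n + Y n) - W n" for n using sum1[of n] by simp
  have Ul: "U \<longlonglongrightarrow> 1/2"
    unfolding Ueq using tendsto_diff[OF tendsto_diff[OF tendsto_const[of 1] Al] Wl] by simp
  have zeq: "z n = (X n, Y n, U n, W n)" for n
    unfolding X_def Y_def U_def W_def Xc_def Yc_def Uc_def Wc_def by simp
  have "z \<longlonglongrightarrow> (1/2, 0, 1/2, 0)"
    unfolding zeq by (intro tendsto_Pair Xl Yl Ul Wl)
  then show ?thesis unfolding z_def .
qed

theorem theorem4p1:
  shows "{s \<in> S22. V s = s} = {(1/2, 0, 1/2, 0)} \<and>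
         (\<exists>U. openin (top_of_set S22) U \<and> (1/2, 0, 1/2, 0) \<in> U \<and>
              (\<forall>s\<in>U. (\<lambda>n. (V ^^ n) s) \<longlonglongrightarrow> (1/2, 0, 1/2, 0)))"
proof (intro conjI)
  have pS: "((1/2, 0, 1/2, 0) :: pt4) \<in> S22" by (simp add: S22_def)
  have pV: "V (1/2, 0, 1/2, 0) = (1/2, 0, 1/2, 0)" by (simp add: V_def)
  show "{s \<in> S22. V s = s} = {(1/2, 0, 1/2, 0)}"
  proof
    show "{s \<in> S22. V s = s} \<subseteq> {(1/2, 0, 1/2, 0)}"
    proof
      fix s assume "s \<in> {s \<in> S22. V s = s}"
      moreover obtain x y u v where "s = (x,y,u,v)" by (cases s) auto
      ultimately show "s \<in> {(1/2, 0, 1/2, 0)}" using fixed_unique by auto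
    qed
    show "{(1/2, 0, 1/2, 0)} \<subseteq> {s \<in> S22. V s = s}" using pS pV by auto
  qed
  define T where "T = {q::pt4. Yc q + Wc q < 1/100} \<inter> {q. Xc q + Yc q - 1/2 < 1/100}
     \<inter> {q. - (1/100) < Xc q + Yc q - 1/2}"
  have oT: "open T" unfolding T_def Yc_def Wc_def Xc_def
    by (intro open_Int open_Collect_less continuous_intros)
  show "\<exists>U. openin (top_of_set S22) U \<and> (1/2, 0, 1/2, 0) \<in> U \<and>
              (\<forall>s\<in>U. (\<lambda>n. (V ^^ n) s) \<longlonglongrightarrow> (1/2, 0, 1/2, 0))"
  proof (intro exI conjI ballI)
    show "openin (top_of_set S22) (S22 \<inter> T)" using oT by (rule openin_open_Int)
    show "(1/2, 0, 1/2, 0) \<in> S22 \<inter> T" using pS by (simp add: T_def Yc_def Wc_def Xc_def)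
    fix s assume s: "s \<in> S22 \<inter> T"
    obtain x y u v where q: "s = (x,y,u,v)" by (cases s) auto
    obtain x' y' u' v' where e: "V (x,y,u,v) = (x',y',u',v')" by (cases "V (x,y,u,v)") auto
    have sT0: "(x,y,u,v) \<in> S22" "y + v < 1/100" "x + y - 1/2 < 1/100" "- (1/100) < x + y - 1/2"
      using s unfolding q by (auto simp: T_def Yc_def Wc_def Xc_def)
    have sT: "(x,y,u,v) \<in> S22" "y + v < 1/100" "\<bar>x + y - 1/2\<bar> < 1/100"
      using sT0 abs_less_iff[of "x + y - 1/2" "1/100"] by linarith+
    have "V s \<in> I" using U_to_I[OF sT e] e unfolding q by simp
    then have "(\<lambda>n. (V ^^ n) (V s)) \<longlonglongrightarrow> (1/2, 0, 1/2, 0)" by (rule conv_I)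
    then have "(\<lambda>n. (V ^^ Suc n) s) \<longlonglongrightarrow> (1/2, 0, 1/2, 0)"
      by (simp add: funpow_Suc_right del: funpow.simps)
    then show "(\<lambda>n. (V ^^ n) s) \<longlonglongrightarrow> (1/2, 0, 1/2, 0)"
      using filterlim_sequentially_Suc[of "\<lambda>n. (V ^^ n) s"] by simp
  qed
qed

end
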